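(* Let $A,B$ be complex $3\times 3$ matrices having the same minimal polynomial, and suppose this minimal polynomial has degree $2$. The following are equivalent: (1) $A$ and $B$ have identical pseudospectra (i.e. $\|(zI-A)^{-1}\|=\|(zI-B)^{-1}\|$ for all $z\in\mathbb{C}$) and $\chi_A=\chi_B$; (2) $A$ and $B$ are unitarily similar.
   Context: $\|\cdot\|$ is the spectral norm; by convention $\|(zI-T)^{-1}\|=\infty$ for $z$ an eigenvalue of $T$. $\chi_T(z)=\det(zI-T)$ is the characteristic polynomial. *)

theory Defs
  imports "HOL-Analysis.Analysis" "HOL-Computational_Algebra.Polynomial"
begin

definition matpow :: "'a::semiring_1^'n^'n \<Rightarrow> nat \<Rightarrow> 'a^'n^'n" where
  "matpow A k = ((\<lambda>M. A ** M) ^^ k) (mat 1)"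

definition poly_mat :: "'a::comm_ring_1 poly \<Rightarrow> 'a^'n^'n \<Rightarrow> 'a^'n^'n" where
  "poly_mat p A = (\<Sum>i\<le>degree p. mat (coeff p i) ** matpow A i)"

definition is_minimal_poly :: "'a::field^'n^'n \<Rightarrow> 'a poly \<Rightarrow> bool" where
  "is_minimal_poly A p \<longleftrightarrow> lead_coeff p = 1 \<and> poly_mat p A = 0 \<and>
     (\<forall>q. q \<noteq> 0 \<and> poly_mat q A = 0 \<longrightarrow> degree p \<le> degree q)"

definition minimal_poly :: "'a::field^'n^'n \<Rightarrow> 'a poly" where
  "minimal_poly A = (THE p. is_minimal_poly A p)"

definition char_poly_fun :: "complex^'n^'n \<Rightarrow> complex \<Rightarrow> complex" where
  "char_poly_fun T = (\<lambda>z. det (mat z - T))"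

text \<open>Spectral norm: operator norm w.r.t. the Euclidean (2-)norm on complex^'n.\<close>
definition spectral_norm :: "complex^'n^'n \<Rightarrow> real" where
  "spectral_norm M = onorm (\<lambda>x. M *v x)"

definition resolvent_norm :: "complex^'n^'n \<Rightarrow> complex \<Rightarrow> ereal" where
  "resolvent_norm T z = (if invertible (mat z - T)
      then ereal (spectral_norm (matrix_inv (mat z - T))) else \<infinity>)"

definition conj_transpose :: "complex^'n^'n \<Rightarrow> complex^'n^'n" where
  "conj_transpose U = (\<chi> i j. cnj (U $ j $ i))"

definition unitary_mat :: "complex^'n^'n \<Rightarrow> bool" where
  "unitary_mat U \<longleftrightarrow> conj_transpose U ** U = mat 1 \<and> U ** conj_transpose U = mat 1"

definition unitarily_similar :: "complex^'n^'n \<Rightarrow> complex^'n^'n \<Rightarrow> bool" where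
  "unitarily_similar A B \<longleftrightarrow> (\<exists>U. unitary_mat U \<and> B = U ** A ** conj_transpose U)"

end

theory Submission
  imports Defs
begin


definition mat3 :: "'a::zero \<Rightarrow> 'a \<Rightarrow> 'a \<Rightarrow> 'a \<Rightarrow> 'a \<Rightarrow> 'a \<Rightarrow> 'a \<Rightarrow> 'a \<Rightarrow> 'a \<Rightarrow> 'a^3^3" where
  "mat3 a b c d e f g h i = vector [vector [a,b,c], vector [d,e,f], vector [g,h,i]]"

lemma mat3_nth [simp]:
  "mat3 a b c d e f g h i $ 1 $ 1 = a" "mat3 a b c d e f g h i $ 1 $ 2 = b" "mat3 a b c d e f g h i $ 1 $ 3 = c"
  "mat3 a b c d e f g h i $ 2 $ 1 = d" "mat3 a b c d e f g h i $ 2 $ 2 = e" "mat3 a b c d e f g h i $ 2 $ 3 = f"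
  "mat3 a b c d e f g h i $ 3 $ 1 = g" "mat3 a b c d e f g h i $ 3 $ 2 = h" "mat3 a b c d e f g h i $ 3 $ 3 = i"
  by (simp_all add: mat3_def)

lemma mat3_eta: "(M::'a::zero^3^3) = mat3 (M$1$1) (M$1$2) (M$1$3) (M$2$1) (M$2$2) (M$2$3) (M$3$1) (M$3$2) (M$3$3)"
  by (simp add: vec_eq_iff forall_3)

lemma mat3_eq_iff: "mat3 a b c d e f g h i = mat3 a' b' c' d' e' f' g' h' i' \<longleftrightarrow>
   a = a' \<and> b = b' \<and> c = c' \<and> d = d' \<and> e = e' \<and> f = f' \<and> g = g' \<and> h = h' \<and> i = i'"
  by (auto simp: vec_eq_iff forall_3 mat3_def)

lemma mat3_mult: "mat3 a b c d e f g h i ** mat3 a' b' c' d' e' f' g' h' i' =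
  mat3 (a*a'+b*d'+c*g') (a*b'+b*e'+c*h') (a*c'+b*f'+c*i')
       (d*a'+e*d'+f*g') (d*b'+e*e'+f*h') (d*c'+e*f'+f*i')
       (g*a'+h*d'+i*g') (g*b'+h*e'+i*h') (g*c'+h*f'+i*i')"
  for a b c d e f g h i a' b' c' d' e' f' g' h' i' :: "'a::semiring_1"
  by (simp add: vec_eq_iff forall_3 matrix_matrix_mult_def sum_3)

lemma mat3_mat: "(mat x :: 'a::zero^3^3) = mat3 x 0 0 0 x 0 0 0 x"
  by (simp add: vec_eq_iff forall_3 mat_def)

lemma mat3_add: "mat3 a b c d e f g h i + mat3 a' b' c' d' e' f' g' h' i' =
  mat3 (a+a') (b+b') (c+c') (d+d') (e+e') (f+f') (g+g') (h+h') (i+i')"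
  for a b c d e f g h i a' b' c' d' e' f' g' h' i' :: "'a::monoid_add"
  by (simp add: vec_eq_iff forall_3)

lemma mat3_diff: "mat3 a b c d e f g h i - mat3 a' b' c' d' e' f' g' h' i' =
  mat3 (a-a') (b-b') (c-c') (d-d') (e-e') (f-f') (g-g') (h-h') (i-i')"
  for a b c d e f g h i a' b' c' d' e' f' g' h' i' :: "'a::group_add"
  by (simp add: vec_eq_iff forall_3)

lemma mat3_zero: "(0::'a::zero^3^3) = mat3 0 0 0 0 0 0 0 0 0"
  by (simp add: vec_eq_iff forall_3)

lemma mat3_ct: "conj_transpose (mat3 a b c d e f g h i) =
   mat3 (cnj a) (cnj d) (cnj g) (cnj b) (cnj e) (cnj h) (cnj c) (cnj f) (cnj i)"
  by (simp add: vec_eq_iff forall_3 conj_transpose_def)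

lemma mat3_mv: "mat3 a b c d e f g h i *v vector [x,y,z] = vector [a*x+b*y+c*z, d*x+e*y+f*z, g*x+h*y+i*z]"
  for a b c d e f g h i x y z :: "'a::semiring_1"
  by (simp add: vec_eq_iff forall_3 matrix_vector_mult_def sum_3)

lemma vec3_eta: "(v::'a::zero^3) = vector [v$1, v$2, v$3]"
  by (simp add: vec_eq_iff forall_3)

lemma vec3_eq_iff: "(vector [a,b,c] :: 'a::zero^3) = vector [a',b',c'] \<longleftrightarrow> a = a' \<and> b = b' \<and> c = c'"
  by (auto simp: vec_eq_iff forall_3)

lemma cayley_hamilton3_aux:
  fixes a b c d e f g h i :: "'a::comm_ring_1"
  defines "A \<equiv> mat3 a b c d e f g h i"
  shows "A ** (A ** A) - mat (a + e + i) ** (A ** A)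
    + mat (a*e - b*d + a*i - c*g + e*i - f*h) ** A
    - mat (a*e*i + b*f*g + c*d*h - a*f*h - b*d*i - c*e*g) = 0"
  unfolding A_def
  apply (simp only: mat3_mult mat3_mat mat3_add mat3_diff mat3_zero mat3_eq_iff)
  by (simp add: algebra_simps)

lemma cayley_hamilton3:
  fixes A :: "'a::comm_ring_1^3^3"
  shows "A ** (A ** A) - mat (A$1$1 + A$2$2 + A$3$3) ** (A ** A)
    + mat (A$1$1*A$2$2 - A$1$2*A$2$1 + A$1$1*A$3$3 - A$1$3*A$3$1 + A$2$2*A$3$3 - A$2$3*A$3$2) ** A
    - mat (det A) = 0"
  using cayley_hamilton3_aux[of "A$1$1" "A$1$2" "A$1$3" "A$2$1" "A$2$2" "A$2$3" "A$3$1" "A$3$2" "A$3$3"]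
  by (simp only: det_3 flip: mat3_eta)



lemma matpow_0 [simp]: "matpow A 0 = mat 1" by (simp add: matpow_def)
lemma matpow_Suc [simp]: "matpow A (Suc k) = A ** matpow A k" by (simp add: matpow_def)

lemma poly_mat_ext:
  fixes A :: "'a::comm_ring_1^'n^'n"
  assumes "degree p \<le> N"
  shows "poly_mat p A = (\<Sum>i\<le>N. mat (coeff p i) ** matpow A i)"
proof -
  have "(\<Sum>i\<le>N. mat (coeff p i) ** matpow A i) = (\<Sum>i\<le>degree p. mat (coeff p i) ** matpow A i)"
  proof (rule sum.mono_neutral_right)
    show "\<forall>i\<in>{..N} - {..degree p}. mat (coeff p i) ** matpow A i = 0"
      by (auto simp: coeff_eq_0 matrix_mul_lid)
  qed (use assms in auto)
  then show ?thesis by (simp add: poly_mat_def)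
qed

lemma mat_add_gen: "mat (a + b) = (mat a + mat b :: 'a::monoid_add^'n^'n)"
  by (simp add: mat_def vec_eq_iff)
lemma mat_diff_gen: "mat (a - b) = (mat a - mat b :: 'a::group_add^'n^'n)"
  by (simp add: mat_def vec_eq_iff)
lemma mat_mult_mat: "mat a ** mat b = (mat (a * b) :: 'a::semiring_1^'n^'n)"
  by (simp add: mat_def vec_eq_iff matrix_matrix_mult_def if_distrib[of "\<lambda>x. _ * x"] cong: if_cong)

lemma matrix_add_rdistrib_gen: "((B + C) ** A) = (B ** A) + (C ** A :: 'a::semiring_1^'n^'n)"
  by (simp add: vec_eq_iff matrix_matrix_mult_def sum.distrib[symmetric] algebra_simps)

lemma matrix_sum_ldistrib: "X ** sum f S = (\<Sum>i\<in>S. X ** f i :: 'a::semiring_1^'n^'n)"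
proof (induction S rule: infinite_finite_induct)
  case (infinite A)
  then show ?case by (simp add: vec_eq_iff matrix_matrix_mult_def)
next
  case empty
  then show ?case by (simp add: vec_eq_iff matrix_matrix_mult_def)
next
  case (insert x F)
  then show ?case by (simp add: matrix_add_ldistrib)
qed

lemma poly_mat_add:
  fixes A :: "'a::comm_ring_1^'n^'n"
  shows "poly_mat (p + q) A = poly_mat p A + poly_mat q A"
proof -
  define N where "N = max (degree p) (degree q)"
  have "degree (p + q) \<le> N" "degree p \<le> N" "degree q \<le> N"
    by (auto simp: N_def degree_add_le)
  then show ?thesis
    by (simp add: poly_mat_ext[of _ N] mat_add_gen matrix_add_rdistrib_gen sum.distrib)
qed

lemma poly_mat_diff:
  fixes A :: "'a::comm_ring_1^'n^'n"
  shows "poly_mat (p - q) A = poly_mat p A - poly_mat q A"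
proof -
  define N where "N = max (degree p) (degree q)"
  have "degree (p - q) \<le> N" "degree p \<le> N" "degree q \<le> N"
    by (auto simp: N_def degree_diff_le)
  moreover have "\<And>a b (C::'a^'n^'n). mat (a - b) ** C = mat a ** C - mat b ** C"
    by (simp add: mat_diff_gen vec_eq_iff matrix_matrix_mult_def algebra_simps sum_subtractf)
  ultimately show ?thesis
    by (simp add: poly_mat_ext[of _ N] sum_subtractf)
qed

lemma poly_mat_smult:
  fixes A :: "'a::comm_ring_1^'n^'n"
  shows "poly_mat (smult c p) A = mat c ** poly_mat p A"
proof -
  have "degree (smult c p) \<le> degree p" by (rule degree_smult_le)
  then have "poly_mat (smult c p) A = (\<Sum>i\<le>degree p. mat (c * coeff p i) ** matpow A i)"
    by (simp add: poly_mat_ext)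
  also have "\<dots> = mat c ** poly_mat p A"
    by (simp add: poly_mat_def matrix_mul_assoc mat_mult_mat matrix_sum_ldistrib)
  finally show ?thesis .
qed

lemma annihilator_exists:
  fixes A :: "'a::field^3^3"
  shows "\<exists>q. q \<noteq> 0 \<and> poly_mat q A = 0"
proof -
  define t where "t = A$1$1 + A$2$2 + A$3$3"
  define s where "s = A$1$1*A$2$2 - A$1$2*A$2$1 + A$1$1*A$3$3 - A$1$3*A$3$1 + A$2$2*A$3$3 - A$2$3*A$3$2"
  define q where "q = [:- det A, s, -t, 1:]"
  have dq: "degree q = 3" by (simp add: q_def)
  have "poly_mat q A = mat (- det A) + mat s ** A + mat (-t) ** (A ** A) + A ** (A ** A)"
    by (simp add: poly_mat_def dq q_def numeral_3_eq_3)
  also have "\<dots> = A ** (A ** A) - mat t ** (A ** A) + mat s ** A - mat (det A)"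
    by (simp add: algebra_simps mat_diff_gen[of 0, simplified] vec_eq_iff matrix_matrix_mult_def sum_negf)
  also have "\<dots> = 0" using cayley_hamilton3[of A] by (simp add: t_def s_def)
  finally show ?thesis using dq by (intro exI[of _ q]) auto
qed

lemma is_minimal_poly_exists:
  fixes A :: "'a::field^3^3"
  shows "\<exists>p. is_minimal_poly A p"
proof -
  define S where "S = {q. q \<noteq> 0 \<and> poly_mat q A = 0}"
  have "S \<noteq> {}" using annihilator_exists[of A] by (auto simp: S_def)
  define n where "n = (LEAST d. \<exists>q\<in>S. degree q = d)"
  have "\<exists>d. \<exists>q\<in>S. degree q = d" using \<open>S \<noteq> {}\<close> by blast
  from LeastI_ex[OF this] obtain q where q: "q \<in> S" "degree q = n"
    unfolding n_def by blast
  have nle: "\<And>r. r \<in> S \<Longrightarrow> n \<le> degree r"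
    unfolding n_def by (metis (mono_tags, lifting) Least_le)
  define p where "p = smult (inverse (lead_coeff q)) q"
  have q0: "q \<noteq> 0" using q by (auto simp: S_def)
  have "lead_coeff p = 1" using q0 by (simp add: p_def)
  moreover have "poly_mat p A = 0" using q by (simp add: p_def poly_mat_smult S_def)
  moreover have "degree p = n"
  proof -
    have "degree p = degree q" using q0 by (simp add: p_def)
    then show ?thesis using q(2) by simp
  qed
  ultimately show ?thesis using nle unfolding is_minimal_poly_def S_def by auto
qed

lemma is_minimal_poly_unique:
  fixes A :: "'a::field^'n^'n"
  assumes "is_minimal_poly A p1" "is_minimal_poly A p2"
  shows "p1 = p2"
proof (rule ccontr)
  assume ne: "p1 \<noteq> p2"
  have p10: "p1 \<noteq> 0" "p2 \<noteq> 0" using assms by (auto simp: is_minimal_poly_def)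
  have deq: "degree p1 = degree p2" using assms p10 unfolding is_minimal_poly_def by (meson le_antisym)
  define r where "r = p1 - p2"
  have r0: "r \<noteq> 0" using ne by (simp add: r_def)
  have pr: "poly_mat r A = 0" using assms by (simp add: r_def poly_mat_diff is_minimal_poly_def)
  have dle: "degree r \<le> degree p1" using deq by (simp add: r_def degree_diff_le)
  have "coeff r (degree p1) = 0" using assms deq by (simp add: r_def is_minimal_poly_def)
  then have "degree r \<noteq> degree p1" using r0 by (metis leading_coeff_0_iff)
  with dle have "degree r < degree p1" by simp
  moreover have "degree p1 \<le> degree r" using assms(1) r0 pr by (simp add: is_minimal_poly_def)
  ultimately show False by simp
qed

lemma minimal_poly_is:
  fixes A :: "'a::field^3^3"
  shows "is_minimal_poly A (minimal_poly A)"
  unfolding minimal_poly_def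
  by (rule theI') (use is_minimal_poly_exists[of A] is_minimal_poly_unique[of A] in blast)



lemmas m3simps = mat3_mult mat3_mat mat3_add mat3_diff mat3_zero mat3_eq_iff mat3_ct

lemma mat3_obtain: obtains a b c d e f g h i where "(A::'a::zero^3^3) = mat3 a b c d e f g h i"
  using mat3_eta by blast

lemma quad_poly_form:
  fixes p :: "complex poly"
  assumes "degree p = 2" "lead_coeff p = 1"
  shows "\<exists>a b. p = [:a*b, -(a+b), 1:]"
proof -
  define c0 where "c0 = coeff p 0"
  define c1 where "c1 = coeff p 1"
  have pe: "p = [:c0, c1, 1:]"
  proof (rule poly_eqI)
    fix n show "coeff p n = coeff [:c0, c1, 1:] n"
      using assms
      by (cases n; cases "n - 1"; cases "n - 2") (auto simp: c0_def c1_def coeff_eq_0 numeral_2_eq_2 coeff_pCons split: nat.splits)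
  qed
  define r where "r = csqrt (c1^2 - 4*c0)"
  define a where "a = (-c1 + r)/2"
  define b where "b = (-c1 - r)/2"
  have "r^2 = c1^2 - 4*c0" by (simp add: r_def)
  then have "a*b = c0" by (simp add: a_def b_def field_simps power2_eq_square)
  moreover have "-(a+b) = c1" by (simp add: a_def b_def field_simps)
  ultimately show ?thesis using pe by blast
qed

lemma poly_mat_quad:
  fixes A :: "complex^3^3"
  shows "poly_mat [:a*b, -(a+b), 1:] A = (A - mat a) ** (A - mat b)"
proof -
  have "poly_mat [:a*b, -(a+b), 1:] A = mat (a*b) + mat (-(a+b)) ** A + A ** A"
    by (simp add: poly_mat_def numeral_2_eq_2)
  also have "\<dots> = (A - mat a) ** (A - mat b)"
    by (rule mat3_obtain[of A]) (simp add: m3simps algebra_simps)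
  finally show ?thesis .
qed

lemma minpoly_not_scalar:
  fixes A :: "complex^3^3"
  assumes "is_minimal_poly A p" "degree p = 2"
  shows "A \<noteq> mat c"
proof
  assume Ac: "A = mat c"
  have "poly_mat [:-c, 1:] A = mat (-c) ** mat 1 + mat 1 ** (A ** mat 1)"
    by (simp only: poly_mat_def) (simp add: numeral_2_eq_2)
  also have "\<dots> = 0" unfolding Ac by (simp only: m3simps) simp
  finally have "poly_mat [:-c, 1:] A = 0" .
  moreover have "[:-c, 1:] \<noteq> 0" by simp
  ultimately have "degree p \<le> degree [:-c, 1:]" using assms(1) unfolding is_minimal_poly_def by blast
  then show False using assms(2) by simp
qed

lemma minpoly2_struct:
  fixes A B :: "complex^3^3"
  assumes "minimal_poly A = minimal_poly B" "degree (minimal_poly A) = 2"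
  shows "\<exists>a b. (A - mat a) ** (A - mat b) = 0 \<and> (B - mat a) ** (B - mat b) = 0
      \<and> (\<forall>c. A \<noteq> mat c) \<and> (\<forall>c. B \<noteq> mat c)"
proof -
  have mA: "is_minimal_poly A (minimal_poly A)" and mB: "is_minimal_poly B (minimal_poly A)"
    using minimal_poly_is[of A] minimal_poly_is[of B] assms(1) by auto
  obtain a b where pe: "minimal_poly A = [:a*b, -(a+b), 1:]"
    using quad_poly_form[OF assms(2)] mA by (auto simp: is_minimal_poly_def)
  have "poly_mat (minimal_poly A) A = (A - mat a) ** (A - mat b)"
       "poly_mat (minimal_poly A) B = (B - mat a) ** (B - mat b)"
    by (simp_all only: pe poly_mat_quad)
  moreover have "poly_mat (minimal_poly A) A = 0" "poly_mat (minimal_poly A) B = 0"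
    using mA mB unfolding is_minimal_poly_def by blast+
  moreover have "\<forall>c. A \<noteq> mat c" "\<forall>c. B \<noteq> mat c"
    using minpoly_not_scalar[OF mA assms(2)] minpoly_not_scalar[OF mB assms(2)] by blast+
  ultimately show ?thesis by (intro exI[of _ a] exI[of _ b]) simp
qed



type_synonym cm = "complex^3^3"

lemma norm_vec3: "norm (v::complex^3) = sqrt ((cmod (v$1))^2 + (cmod (v$2))^2 + (cmod (v$3))^2)"
  by (simp add: norm_vec_def L2_set_def sum_3)

lemma norm_vec3_sq: "(norm (v::complex^3))^2 = (cmod (v$1))^2 + (cmod (v$2))^2 + (cmod (v$3))^2"
  by (simp add: norm_vec3)

lemma cmod_sq_cnj: "complex_of_real ((cmod z)^2) = cnj z * z"
  by (metis complex_norm_square mult.commute)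

definition cinner3 :: "complex^3 \<Rightarrow> complex^3 \<Rightarrow> complex" where
  "cinner3 x y = cnj (x$1) * y$1 + cnj (x$2) * y$2 + cnj (x$3) * y$3"

lemma norm_sq_cinner3: "complex_of_real ((norm x)^2) = cinner3 x x"
  by (simp only: norm_vec3_sq cinner3_def of_real_add cmod_sq_cnj)

lemma cinner3_mv: "cinner3 ((M::cm) *v x) y = cinner3 x (conj_transpose M *v y)"
  by (simp add: cinner3_def matrix_vector_mult_def sum_3 conj_transpose_def algebra_simps)

lemma ct_ct [simp]: "conj_transpose (conj_transpose (M::complex^'n^'n)) = M"
  by (simp add: conj_transpose_def vec_eq_iff)

lemma ct_mult: "conj_transpose ((A::complex^'n^'n) ** B) = conj_transpose B ** conj_transpose A"
  by (simp add: conj_transpose_def vec_eq_iff matrix_matrix_mult_def mult.commute)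

lemma ct_mat [simp]: "conj_transpose (mat z :: complex^'n^'n) = mat (cnj z)"
  by (simp add: conj_transpose_def vec_eq_iff mat_def)

lemma unitary_ct: "unitary_mat U \<Longrightarrow> unitary_mat (conj_transpose U)"
  by (simp add: unitary_mat_def)

lemma unitary_mult: "unitary_mat U \<Longrightarrow> unitary_mat V \<Longrightarrow> unitary_mat (U ** V)"
  unfolding unitary_mat_def ct_mult
  by (metis matrix_mul_assoc matrix_mul_lid matrix_mul_rid)

lemma unitary_one: "unitary_mat (mat 1 :: complex^'n^'n)"
  by (simp add: unitary_mat_def)

lemma unitary_norm:
  assumes "unitary_mat (U::cm)"
  shows "norm (U *v x) = norm x"
proof -
  have "cinner3 (U *v x) (U *v x) = cinner3 x x"
    using assms by (simp add: cinner3_mv matrix_vector_mul_assoc unitary_mat_def)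
  then have "complex_of_real ((norm (U *v x))^2) = complex_of_real ((norm x)^2)"
    by (simp only: norm_sq_cinner3)
  then have "(norm (U *v x))^2 = (norm x)^2" using of_real_eq_iff by blast
  then show ?thesis by (simp add: power2_eq_iff_nonneg)
qed

lemma unitary_cancel:
  assumes "unitary_mat (U::complex^'n^'n)"
  shows "conj_transpose U ** (U ** M ** conj_transpose U) ** U = M"
    "U ** (conj_transpose U ** M ** U) ** conj_transpose U = M"
  using assms unfolding unitary_mat_def
  by (metis matrix_mul_assoc matrix_mul_lid matrix_mul_rid)+

lemma spectral_norm_unitary_le:
  assumes "unitary_mat (U::cm)"
  shows "spectral_norm (U ** M ** conj_transpose U) \<le> spectral_norm M"
  unfolding spectral_norm_def
proof (rule onorm_le)
  fix x
  have "norm ((U ** M ** conj_transpose U) *v x) = norm (M *v (conj_transpose U *v x))"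
    using assms by (simp add: unitary_norm flip: matrix_vector_mul_assoc)
  also have "\<dots> \<le> onorm ((*v) M) * norm (conj_transpose U *v x)"
    by (rule onorm[OF matrix_vector_mul_bounded_linear])
  also have "norm (conj_transpose U *v x) = norm x"
    using unitary_norm[OF unitary_ct[OF assms]] .
  finally show "norm ((U ** M ** conj_transpose U) *v x) \<le> onorm ((*v) M) * norm x" .
qed

lemma spectral_norm_unitary:
  assumes "unitary_mat (U::cm)"
  shows "spectral_norm (U ** M ** conj_transpose U) = spectral_norm M"
proof (rule antisym)
  show "spectral_norm (U ** M ** conj_transpose U) \<le> spectral_norm M"
    by (rule spectral_norm_unitary_le[OF assms])
  have "spectral_norm (conj_transpose U ** (U ** M ** conj_transpose U) ** conj_transpose (conj_transpose U))
       \<le> spectral_norm (U ** M ** conj_transpose U)"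
    by (rule spectral_norm_unitary_le[OF unitary_ct[OF assms]])
  moreover have "conj_transpose U ** (U ** M ** conj_transpose U) ** conj_transpose (conj_transpose U) = M"
    using unitary_cancel[OF assms] by simp
  ultimately show "spectral_norm M \<le> spectral_norm (U ** M ** conj_transpose U)" by simp
qed

lemma inverse_unique:
  fixes X Y :: cm
  assumes "X ** Y = mat 1"
  shows "invertible X" "matrix_inv X = Y"
proof -
  have YX: "Y ** X = mat 1" using assms matrix_left_right_inverse by blast
  then show "invertible X" using assms unfolding invertible_def by blast
  have "\<exists>Y'. X ** Y' = mat 1 \<and> Y' ** X = mat 1" using assms YX by blast
  then have "X ** matrix_inv X = mat 1 \<and> matrix_inv X ** X = mat 1"
    unfolding matrix_inv_def by (rule someI_ex)
  then show "matrix_inv X = Y"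
    by (metis YX matrix_mul_assoc matrix_mul_lid matrix_mul_rid)
qed

lemma matrix_inv_props:
  fixes X :: cm
  assumes "invertible X"
  shows "X ** matrix_inv X = mat 1"
  using assms unfolding invertible_def matrix_inv_def by (rule someI_ex[THEN conjunct1])

lemma unitary_conj_mat:
  assumes "unitary_mat (U::cm)"
  shows "U ** mat z ** conj_transpose U = mat z"
proof -
  have "U ** mat z = mat z ** U"
    by (rule mat3_obtain[of U]) (simp add: m3simps algebra_simps)
  then show ?thesis using assms by (simp add: unitary_mat_def flip: matrix_mul_assoc)
qed

lemma unitary_conj_diff:
  "U ** (X - Y) ** conj_transpose U = U ** X ** conj_transpose U - U ** Y ** conj_transpose U"
  for U X Y :: cm
  by (rule mat3_obtain[of U], rule mat3_obtain[of X], rule mat3_obtain[of Y]) (simp add: m3simps algebra_simps)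

lemma unitary_conj_mult:
  assumes "unitary_mat (U::cm)"
  shows "U ** (X ** Y) ** conj_transpose U = (U ** X ** conj_transpose U) ** (U ** Y ** conj_transpose U)"
  using assms by (simp add: unitary_mat_def matrix_mul_assoc)
      (metis matrix_mul_assoc matrix_mul_rid)

lemma resolvent_norm_unitary:
  assumes U: "unitary_mat (U::cm)"
  shows "resolvent_norm (U ** A ** conj_transpose U) z = resolvent_norm A z"
proof -
  have e: "mat z - U ** A ** conj_transpose U = U ** (mat z - A) ** conj_transpose U"
    using U by (simp add: unitary_conj_diff unitary_conj_mat)
  show ?thesis
  proof (cases "invertible (mat z - A)")
    case True
    define R where "R = matrix_inv (mat z - A)"
    have "(mat z - A) ** R = mat 1" using True by (simp add: R_def matrix_inv_props)
    then have "(U ** (mat z - A) ** conj_transpose U) ** (U ** R ** conj_transpose U) = mat 1"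
      using U by (metis unitary_conj_mult unitary_conj_mat)
    then have "invertible (mat z - U ** A ** conj_transpose U)"
      "matrix_inv (mat z - U ** A ** conj_transpose U) = U ** R ** conj_transpose U"
      using inverse_unique e by auto
    then show ?thesis using True U
      by (simp add: resolvent_norm_def spectral_norm_unitary R_def)
  next
    case False
    have "\<not> invertible (mat z - U ** A ** conj_transpose U)"
    proof
      assume "invertible (mat z - U ** A ** conj_transpose U)"
      then obtain R where R: "(U ** (mat z - A) ** conj_transpose U) ** R = mat 1"
        using e matrix_inv_props by metis
      have "(mat z - A) ** (conj_transpose U ** R ** U) = mat 1"
      proof -
        have "conj_transpose U ** ((U ** (mat z - A) ** conj_transpose U) ** R) ** U = mat 1"
          using U R by (simp add: unitary_mat_def)
        then show ?thesis using U
          by (simp add: unitary_mat_def matrix_mul_assoc)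
      qed
      then show False using False inverse_unique by blast
    qed
    then show ?thesis using False by (simp add: resolvent_norm_def)
  qed
qed

lemma char_poly_unitary:
  assumes U: "unitary_mat (U::cm)"
  shows "char_poly_fun (U ** A ** conj_transpose U) = char_poly_fun A"
proof
  fix z
  have e: "mat z - U ** A ** conj_transpose U = U ** (mat z - A) ** conj_transpose U"
    using U by (simp add: unitary_conj_diff unitary_conj_mat)
  have "det U * det (conj_transpose U) = 1"
    using U by (metis det_I det_mul unitary_mat_def)
  then show "char_poly_fun (U ** A ** conj_transpose U) z = char_poly_fun A z"
    by (simp add: char_poly_fun_def e det_mul algebra_simps)
qed

lemma us_refl: "unitarily_similar A A"
  unfolding unitarily_similar_def by (intro exI[of _ "mat 1"]) (simp add: unitary_one)

lemma us_sym: "unitarily_similar A (B::cm) \<Longrightarrow> unitarily_similar B A"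
  unfolding unitarily_similar_def
proof (elim exE conjE)
  fix U assume U: "unitary_mat U" "B = U ** A ** conj_transpose U"
  have "A = conj_transpose U ** B ** conj_transpose (conj_transpose U)"
    using U unitary_cancel[OF U(1)] by simp
  then show "\<exists>U. unitary_mat U \<and> A = U ** B ** conj_transpose U"
    using unitary_ct[OF U(1)] by blast
qed

lemma us_trans: "unitarily_similar A (B::cm) \<Longrightarrow> unitarily_similar B C \<Longrightarrow> unitarily_similar A C"
  unfolding unitarily_similar_def
proof (elim exE conjE)
  fix U V assume U: "unitary_mat U" "B = U ** A ** conj_transpose U"
    and V: "unitary_mat V" "C = V ** B ** conj_transpose V"
  have "C = (V ** U) ** A ** conj_transpose (V ** U)"
    using U V by (simp add: ct_mult matrix_mul_assoc)
  then show "\<exists>U. unitary_mat U \<and> C = U ** A ** conj_transpose U"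
    using unitary_mult[OF V(1) U(1)] by blast
qed

lemma us_invariants:
  assumes "unitarily_similar A (B::cm)"
  shows "(\<forall>z. resolvent_norm A z = resolvent_norm B z) \<and> char_poly_fun A = char_poly_fun B"
  using assms unfolding unitarily_similar_def
  by (auto simp: resolvent_norm_unitary char_poly_unitary)



definition G23 :: "complex \<Rightarrow> complex \<Rightarrow> cm" where
  "G23 c s = mat3 1 0 0 0 c s 0 (-cnj s) (cnj c)"
definition G12 :: "complex \<Rightarrow> complex \<Rightarrow> cm" where
  "G12 c s = mat3 c s 0 (-cnj s) (cnj c) 0 0 0 1"

lemma cnj_mult_self_eq: "cnj c * c = complex_of_real ((cmod c)^2)"
  by (rule cmod_sq_cnj[symmetric])

lemma mv3: "(T::'a::semiring_1^3^3) *v vector [x,y,z] =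
   vector [T$1$1*x + T$1$2*y + T$1$3*z, T$2$1*x + T$2$2*y + T$2$3*z, T$3$1*x + T$3$2*y + T$3$3*z]"
  by (simp add: vec_eq_iff forall_3 matrix_vector_mult_def sum_3)

lemma vec3_add: "vector [a,b,c] + vector [d,e,f] = (vector [a+d, b+e, c+f] :: 'a::monoid_add^3)"
  by (simp add: vec_eq_iff forall_3)

lemma mv_smult: "(A::'a::comm_semiring_1^'n^'m) *v (c *s x) = c *s (A *v x)"
  by (simp add: vec_eq_iff matrix_vector_mult_def sum_distrib_left algebra_simps)

lemma vec3_zero: "(0::'a::zero^3) = vector [0,0,0]"
  by (simp add: vec_eq_iff forall_3)

lemma G23_unitary: "cnj c * c + cnj s * s = 1 \<Longrightarrow> unitary_mat (G23 c s)"
  unfolding unitary_mat_def G23_def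
  by (simp add: m3simps algebra_simps)

lemma G12_unitary: "cnj c * c + cnj s * s = 1 \<Longrightarrow> unitary_mat (G12 c s)"
  unfolding unitary_mat_def G12_def
  by (simp add: m3simps algebra_simps)

lemma givens_exists:
  fixes x y :: complex
  shows "\<exists>c s. cnj c * c + cnj s * s = 1 \<and> c * x + s * y = complex_of_real (sqrt ((cmod x)^2 + (cmod y)^2))
     \<and> - cnj s * x + cnj c * y = 0"
proof (cases "x = 0 \<and> y = 0")
  case True
  then show ?thesis by (intro exI[of _ 1] exI[of _ 0]) simp
next
  case False
  define r where "r = sqrt ((cmod x)^2 + (cmod y)^2)"
  have rpos: "r > 0" using False by (auto simp: r_def add_pos_nonneg add_nonneg_pos)
  have "r^2 = (cmod x)^2 + (cmod y)^2" by (simp add: r_def)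
  then have r2: "complex_of_real (r^2) = cnj x * x + cnj y * y"
    by (simp only: of_real_add cmod_sq_cnj)
  have r2': "complex_of_real r * complex_of_real r = cnj x * x + cnj y * y"
    using r2 by (simp add: power2_eq_square)
  define c where "c = cnj x / complex_of_real r"
  define s where "s = cnj y / complex_of_real r"
  have rne: "complex_of_real r \<noteq> 0" using rpos by simp
  have "cnj c * c + cnj s * s = (cnj x * x + cnj y * y) / (complex_of_real r * complex_of_real r)"
    by (simp add: c_def s_def add_divide_distrib mult.commute)
  also have "\<dots> = 1" using rne by (simp flip: r2')
  finally have 1: "cnj c * c + cnj s * s = 1" .
  have "c * x + s * y = (cnj x * x + cnj y * y) / complex_of_real r"
    by (simp add: c_def s_def add_divide_distrib mult.commute)
  also have "\<dots> = complex_of_real r" using r2' rne by (simp add: field_simps)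
  finally have 2: "c * x + s * y = complex_of_real r" .
  have 3: "- cnj s * x + cnj c * y = 0" by (simp add: c_def s_def field_simps)
  show ?thesis using 1 2 3 unfolding r_def by blast
qed

lemma vec3_smult: "c *s vector [x,y,z] = (vector [c*x, c*y, c*z] :: 'a::semiring_1^3)"
  by (simp add: vec_eq_iff forall_3)

lemma mat_mv: "mat a *v (u::'a::comm_ring_1^'n) = a *s u"
  by (simp add: vec_eq_iff matrix_vector_mult_def mat_def if_distrib[of "\<lambda>x. x * _"] cong: if_cong)

lemma to_e1:
  fixes u :: "complex^3"
  shows "\<exists>W \<rho>. unitary_mat W \<and> W *v u = vector [\<rho>, 0, 0]"
proof -
  obtain c1 s1 where g1: "cnj c1 * c1 + cnj s1 * s1 = 1" "c1 * u$2 + s1 * u$3 = complex_of_real (sqrt ((cmod (u$2))^2 + (cmod (u$3))^2))"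
     "- cnj s1 * u$2 + cnj c1 * u$3 = 0"
    using givens_exists by blast
  define r1 where "r1 = complex_of_real (sqrt ((cmod (u$2))^2 + (cmod (u$3))^2))"
  obtain c2 s2 where g2: "cnj c2 * c2 + cnj s2 * s2 = 1" "c2 * u$1 + s2 * r1 = complex_of_real (sqrt ((cmod (u$1))^2 + (cmod r1)^2))"
     "- cnj s2 * u$1 + cnj c2 * r1 = 0"
    using givens_exists by blast
  have "G23 c1 s1 *v u = vector [u$1, r1, 0]"
    using g1 by (subst vec3_eta[of u]) (simp add: G23_def mat3_mv r1_def)
  then have "(G12 c2 s2 ** G23 c1 s1) *v u = vector [complex_of_real (sqrt ((cmod (u$1))^2 + (cmod r1)^2)), 0, 0]"
    using g2 by (simp add: G12_def mat3_mv flip: matrix_vector_mul_assoc)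
  moreover have "unitary_mat (G12 c2 s2 ** G23 c1 s1)"
    using g1 g2 by (simp add: unitary_mult G12_unitary G23_unitary)
  ultimately show ?thesis by blast
qed

definition upper3 :: "cm \<Rightarrow> bool" where
  "upper3 T \<longleftrightarrow> T$2$1 = 0 \<and> T$3$1 = 0 \<and> T$3$2 = 0"

lemma first_col:
  fixes A :: cm
  assumes "A *v u = l *s u" "u \<noteq> 0"
  shows "\<exists>U. unitary_mat U \<and> (U ** A ** conj_transpose U)$1$1 = l
     \<and> (U ** A ** conj_transpose U)$2$1 = 0 \<and> (U ** A ** conj_transpose U)$3$1 = 0"
proof -
  obtain W \<rho> where W: "unitary_mat W" "W *v u = vector [\<rho>, 0, 0]" using to_e1 by blast
  have "\<rho> \<noteq> 0"
  proof
    assume "\<rho> = 0"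
    then have "W *v u = 0" using W(2) by (simp add: vec_eq_iff forall_3)
    then have "norm u = 0" using unitary_norm[OF W(1), of u] by simp
    then show False using assms(2) by simp
  qed
  define T where "T = W ** A ** conj_transpose W"
  have "T *v (W *v u) = W *v (A *v u)"
    using W(1) by (simp add: T_def unitary_mat_def matrix_vector_mul_assoc)
      (metis matrix_mul_assoc matrix_mul_rid)
  also have "\<dots> = l *s (W *v u)" using assms(1) by (simp add: vec_eq_iff matrix_vector_mult_def sum_distrib_left algebra_simps)
  finally have "T *v vector [\<rho>, 0, 0] = l *s vector [\<rho>, 0, 0]" using W(2) by simp
  then have "T$1$1 * \<rho> = l * \<rho> \<and> T$2$1 * \<rho> = 0 \<and> T$3$1 * \<rho> = 0"
    by (simp add: mv3 vec3_smult vec3_eq_iff)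
  then show ?thesis using W(1) \<open>\<rho> \<noteq> 0\<close> unfolding T_def by (intro exI[of _ W]) auto
qed

lemma second_col:
  fixes T :: cm
  assumes "T$2$1 = 0" "T$3$1 = 0"
  shows "\<exists>V. unitary_mat V \<and> upper3 (V ** T ** conj_transpose V) \<and> (V ** T ** conj_transpose V)$1$1 = T$1$1"
proof (cases "T$3$2 = 0")
  case True
  then show ?thesis using assms
    by (intro exI[of _ "mat 1"]) (simp add: unitary_one upper3_def)
next
  case False
  define d11 where "d11 = T$2$2"
  define d12 where "d12 = T$2$3"
  define d21 where "d21 = T$3$2"
  define d22 where "d22 = T$3$3"
  define disc where "disc = csqrt ((d11 + d22)^2 - 4 * (d11 * d22 - d12 * d21))"
  define mu where "mu = ((d11 + d22) + disc) / 2"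
  have disc2: "disc^2 = (d11 + d22)^2 - 4 * (d11 * d22 - d12 * d21)" by (simp add: disc_def)
  have mueq: "mu * mu - (d11 + d22) * mu + (d11 * d22 - d12 * d21) = 0"
  proof -
    have "4 * (mu * mu - (d11 + d22) * mu + (d11 * d22 - d12 * d21)) = disc^2 - ((d11 + d22)^2 - 4 * (d11 * d22 - d12 * d21))"
      by (simp add: mu_def field_simps power2_eq_square)
    then have "4 * (mu * mu - (d11 + d22) * mu + (d11 * d22 - d12 * d21)) = 0"
      by (simp only: disc2 diff_self)
    then show ?thesis by (metis mult_eq_0_iff zero_neq_numeral)
  qed
  define w where "w = (vector [0, mu - d22, d21] :: complex^3)"
  have Tw: "T *v w = vector [T$1$2 * (mu - d22) + T$1$3 * d21, mu * (mu - d22), mu * d21]"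
  proof -
    have "T *v w = vector [T$1$2 * (mu - d22) + T$1$3 * d21, d11 * (mu - d22) + d12 * d21, d21 * (mu - d22) + d22 * d21]"
      unfolding w_def using assms
      by (simp add: mv3 d11_def d12_def d21_def d22_def)
    moreover have "d11 * (mu - d22) + d12 * d21 = mu * (mu - d22)"
      using mueq by (simp add: algebra_simps)
    moreover have "d21 * (mu - d22) + d22 * d21 = mu * d21" by (simp add: algebra_simps)
    ultimately show ?thesis by simp
  qed
  define k where "k = T$1$2 * (mu - d22) + T$1$3 * d21"
  obtain c s where g: "cnj c * c + cnj s * s = 1" "c * (mu - d22) + s * d21 = complex_of_real (sqrt ((cmod (mu - d22))^2 + (cmod d21)^2))"
     "- cnj s * (mu - d22) + cnj c * d21 = 0"
    using givens_exists by blast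
  define r where "r = complex_of_real (sqrt ((cmod (mu - d22))^2 + (cmod d21)^2))"
  have "r \<noteq> 0" using False by (simp add: r_def d21_def)
  define V where "V = G23 c s"
  have V: "unitary_mat V" using g by (simp add: V_def G23_unitary)
  have Vw: "V *v w = vector [0, r, 0]" using g by (simp add: V_def G23_def w_def mat3_mv r_def)
  define T' where "T' = V ** T ** conj_transpose V"
  have Ve1: "V *v vector [1,0,0] = vector [1,0,0]" "conj_transpose V *v vector [1,0,0] = vector [1,0,0]"
    by (simp_all add: V_def G23_def mat3_mv mat3_ct)
  have "T' *v (V *v w) = V *v (T *v w)"
    using V by (simp add: T'_def unitary_mat_def matrix_vector_mul_assoc)
      (metis matrix_mul_assoc matrix_mul_rid)
  also have "T *v w = mu *s w + k *s vector [1,0,0]"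
    unfolding Tw by (simp add: w_def k_def vec3_smult vec3_add algebra_simps)
  also have "V *v (mu *s w + k *s vector [1,0,0]) = mu *s (V *v w) + k *s vector [1, 0, 0]"
    using Ve1 by (simp add: matrix_vector_right_distrib mv_smult)
  finally have "T' *v vector [0, r, 0] = vector [k, mu * r, 0]"
    using Vw by (simp add: vec3_smult vec3_add)
  then have "T'$3$2 * r = 0"
    by (simp add: mv3 vec3_eq_iff)
  then have t32: "T'$3$2 = 0" using \<open>r \<noteq> 0\<close> by simp
  have "T' *v vector [1,0,0] = V *v (T *v vector [1,0,0])"
    using Ve1 by (simp add: T'_def flip: matrix_vector_mul_assoc)
  also have "T *v vector [1,0,0] = vector [T$1$1, 0, 0]"
    using assms by (simp add: mv3)
  also have "V *v vector [T$1$1, 0, 0] = vector [T$1$1, 0, 0]"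
    by (simp add: V_def G23_def mat3_mv)
  finally have "T'$1$1 = T$1$1 \<and> T'$2$1 = 0 \<and> T'$3$1 = 0"
    by (simp add: mv3 vec3_eq_iff)
  then show ?thesis using V t32 unfolding T'_def upper3_def by blast
qed

lemma schur3:
  fixes A :: cm
  assumes "A *v u = l *s u" "u \<noteq> 0"
  shows "\<exists>U. unitary_mat U \<and> upper3 (U ** A ** conj_transpose U) \<and> (U ** A ** conj_transpose U)$1$1 = l"
proof -
  obtain U where U: "unitary_mat U" "(U ** A ** conj_transpose U)$1$1 = l"
     "(U ** A ** conj_transpose U)$2$1 = 0" "(U ** A ** conj_transpose U)$3$1 = 0"
    using first_col[OF assms] by blast
  obtain V where V: "unitary_mat V" "upper3 (V ** (U ** A ** conj_transpose U) ** conj_transpose V)"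
     "(V ** (U ** A ** conj_transpose U) ** conj_transpose V)$1$1 = l"
    using second_col[OF U(3,4)] U(2) by metis
  have "V ** (U ** A ** conj_transpose U) ** conj_transpose V = (V ** U) ** A ** conj_transpose (V ** U)"
    by (simp add: ct_mult matrix_mul_assoc)
  then show ?thesis using V U unitary_mult[OF V(1) U(1)] by metis
qed

lemma eigvec_from_minpoly:
  fixes A :: cm
  assumes "(A - mat a) ** (A - mat b) = 0" "A \<noteq> mat b"
  shows "\<exists>u. u \<noteq> 0 \<and> A *v u = a *s u"
proof -
  have "\<exists>e. (A - mat b) *v e \<noteq> 0"
  proof (rule ccontr)
    assume "\<not> ?thesis"
    then have h: "(A - mat b) *v vector[1,0,0] = 0" "(A - mat b) *v vector[0,1,0] = 0" "(A - mat b) *v vector[0,0,1] = 0"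
      by auto
    have "\<forall>i j. (A - mat b)$i$j = 0"
      using h by (simp add: mv3 vec3_zero vec3_eq_iff forall_3)
    then have "A = mat b"
      by (simp add: vec_eq_iff)
    then show False using assms(2) by simp
  qed
  then obtain e where e: "(A - mat b) *v e \<noteq> 0" by blast
  define u where "u = (A - mat b) *v e"
  have "(A - mat a) *v u = 0" using assms(1) by (simp add: u_def matrix_vector_mul_assoc)
  then have "A *v u = a *s u" by (simp add: matrix_vector_mult_diff_rdistrib mat_mv)
  then show ?thesis using e u_def by blast
qed



definition Cf :: "complex \<Rightarrow> complex \<Rightarrow> real \<Rightarrow> cm" where
  "Cf a b r = mat3 a (complex_of_real r) 0 0 b 0 0 0 b"

lemma row_reduce:
  "unitarily_similar (mat3 a x1 x2 0 b 0 0 0 b) (Cf a b (sqrt ((cmod x1)^2 + (cmod x2)^2)))"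
proof -
  obtain c s where g: "cnj c * c + cnj s * s = 1" "c * x1 + s * x2 = complex_of_real (sqrt ((cmod x1)^2 + (cmod x2)^2))"
     "- cnj s * x1 + cnj c * x2 = 0"
    using givens_exists by blast
  define V where "V = G23 (cnj c) (cnj s)"
  have V: "unitary_mat V" using g by (simp add: V_def G23_unitary mult.commute)
  have g1': "c * cnj c + s * cnj s = 1" using g(1) by (simp add: mult.commute)
  have g3': "x2 * cnj c - x1 * cnj s = 0" using g(3) by (simp add: algebra_simps)
  have "V ** mat3 a x1 x2 0 b 0 0 0 b ** conj_transpose V = Cf a b (sqrt ((cmod x1)^2 + (cmod x2)^2))"
    unfolding V_def G23_def Cf_def
    apply (simp only: m3simps)
    apply (simp add: algebra_simps)
    apply (intro conjI)
    using g(2) g1' g3' by (simp_all add: algebra_simps flip: distrib_left distrib_right)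
  then show ?thesis using V unfolding unitarily_similar_def by metis
qed

lemma col_reduce:
  "unitarily_similar (mat3 a 0 x2 0 a y 0 0 a) (Cf a a (sqrt ((cmod x2)^2 + (cmod y)^2)))"
proof -
  obtain c s where g: "cnj c * c + cnj s * s = 1" "c * x2 + s * y = complex_of_real (sqrt ((cmod x2)^2 + (cmod y)^2))"
     "- cnj s * x2 + cnj c * y = 0"
    using givens_exists by blast
  define r where "r = complex_of_real (sqrt ((cmod x2)^2 + (cmod y)^2))"
  define V where "V = G12 c s"
  have V: "unitary_mat V" using g by (simp add: V_def G12_unitary)
  have g1': "c * cnj c + s * cnj s = 1" using g(1) by (simp add: mult.commute)
  have "V ** mat3 a 0 x2 0 a y 0 0 a ** conj_transpose V = mat3 a 0 r 0 a 0 0 0 a"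
    unfolding V_def G12_def r_def
    apply (simp only: m3simps)
    apply (simp add: algebra_simps)
    apply (intro conjI)
    using g(2) g(3) g1' by (simp_all add: algebra_simps flip: distrib_left distrib_right)
  then have 1: "unitarily_similar (mat3 a 0 x2 0 a y 0 0 a) (mat3 a 0 r 0 a 0 0 0 a)"
    using V unfolding unitarily_similar_def by metis
  define P where "P = (mat3 1 0 0 0 0 1 0 1 0 :: cm)"
  have P: "unitary_mat P" by (simp add: P_def unitary_mat_def m3simps)
  have "P ** mat3 a 0 r 0 a 0 0 0 a ** conj_transpose P = Cf a a (sqrt ((cmod x2)^2 + (cmod y)^2))"
    by (simp add: P_def Cf_def r_def m3simps)
  then have 2: "unitarily_similar (mat3 a 0 r 0 a 0 0 0 a) (Cf a a (sqrt ((cmod x2)^2 + (cmod y)^2)))"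
    using P unfolding unitarily_similar_def by metis
  show ?thesis by (rule us_trans[OF 1 2])
qed

lemma triang_setup:
  fixes A :: cm
  assumes "A *v u = l *s u" "u \<noteq> 0"
  shows "\<exists>x1 x2 d2 y d3. unitarily_similar A (mat3 l x1 x2 0 d2 y 0 0 d3)"
proof -
  obtain U where U: "unitary_mat U" "upper3 (U ** A ** conj_transpose U)" "(U ** A ** conj_transpose U)$1$1 = l"
    using schur3[OF assms] by blast
  define T where "T = U ** A ** conj_transpose U"
  have "T = mat3 l (T$1$2) (T$1$3) 0 (T$2$2) (T$2$3) 0 0 (T$3$3)"
    using U(2,3) unfolding T_def[symmetric] upper3_def by (subst mat3_eta) simp
  then show ?thesis using U(1) unfolding unitarily_similar_def T_def by metis
qed

lemma us_poly2:
  assumes "unitarily_similar A (T::cm)" "(A - mat a) ** (A - mat b) = 0"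
  shows "(T - mat a) ** (T - mat b) = 0"
proof -
  obtain U where U: "unitary_mat U" "T = U ** A ** conj_transpose U"
    using assms(1) unfolding unitarily_similar_def by blast
  have "U ** ((A - mat a) ** (A - mat b)) ** conj_transpose U = (T - mat a) ** (T - mat b)"
    using U by (simp add: unitary_conj_mult unitary_conj_diff unitary_conj_mat)
  then show ?thesis using assms(2)
    by (simp add: vec_eq_iff matrix_matrix_mult_def)
qed

lemma char_upper:
  "char_poly_fun (mat3 l x1 x2 0 d2 y 0 0 d3) z = (z - l) * (z - d2) * (z - d3)"
  by (simp add: char_poly_fun_def det_3 m3simps)

lemma cubic_aux1: "(t::complex) \<noteq> 0 \<Longrightarrow> t * t * (2 * t) \<noteq> t * (2 * t)^2"
  by (simp add: power2_eq_square)
lemma cubic_aux2: "(t::complex) \<noteq> 0 \<Longrightarrow> t * t * t \<noteq> t * (2 * t)^2"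
  by (simp add: power2_eq_square)

lemma cubic_cancel:
  fixes a b d2 d3 :: complex
  assumes "a \<noteq> b" "d2 = a \<or> d2 = b" "d3 = a \<or> d3 = b"
    "\<And>z. (z - a) * (z - d2) * (z - d3) = (z - a) * (z - b)^2"
  shows "d2 = b \<and> d3 = b"
proof -
  define z where "z = 2 * a - b"
  define t where "t = a - b"
  have t0: "t \<noteq> 0" using assms(1) by (simp add: t_def)
  have za: "z - a = t" "z - b = 2 * t" by (simp_all add: z_def t_def)
  have eq: "(z - a) * (z - d2) * (z - d3) = (z - a) * (z - b)^2" by (rule assms(4))
  show ?thesis
  proof (rule ccontr)
    assume "\<not> ?thesis"
    then consider "d2 = a" "d3 = a" | "d2 = a" "d3 = b" | "d2 = b" "d3 = a" using assms(2,3) by blast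
    then show False
    proof cases
      case 1
      then show False using eq cubic_aux2[OF t0] unfolding 1 za by simp
    next
      case 2
      then show False using eq cubic_aux1[OF t0] unfolding 2 za by simp
    next
      case 3
      then show False using eq cubic_aux1[OF t0] unfolding 3 za by (simp add: mult.commute mult.left_commute)
    qed
  qed
qed

lemma upper_prod: "mat3 a1 b1 c1 0 e1 f1 0 0 i1 ** mat3 a2 b2 c2 0 e2 f2 0 0 i2 =
   (mat3 (a1*a2) (a1*b2+b1*e2) (a1*c2+b1*f2+c1*i2) 0 (e1*e2) (e1*f2+f1*i2) 0 0 (i1*i2) :: cm)"
  by (simp add: mat3_mult)

lemma upper_minus: "mat3 a1 b1 c1 0 e1 f1 0 0 i1 - mat c = (mat3 (a1-c) b1 c1 0 (e1-c) f1 0 0 (i1-c) :: cm)"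
  by (simp add: mat3_mat mat3_diff)

lemma canon_diag:
  fixes A :: cm
  assumes "(A - mat a) ** (A - mat b) = 0" "a \<noteq> b"
    "\<And>z. char_poly_fun A z = (z - a) * (z - b)^2" "A \<noteq> mat b"
  shows "\<exists>r. r \<ge> 0 \<and> unitarily_similar A (Cf a b r)"
proof -
  obtain u where u: "u \<noteq> 0" "A *v u = a *s u" using eigvec_from_minpoly[OF assms(1,4)] by blast
  obtain x1 x2 d2 y d3 where T: "unitarily_similar A (mat3 a x1 x2 0 d2 y 0 0 d3)"
    using triang_setup[OF u(2,1)] by blast
  have p: "(mat3 a x1 x2 0 d2 y 0 0 d3 - mat a) ** (mat3 a x1 x2 0 d2 y 0 0 d3 - mat b) = 0"
    by (rule us_poly2[OF T assms(1)])
  then have "mat3 (a-a) x1 x2 0 (d2-a) y 0 0 (d3-a) ** mat3 (a-b) x1 x2 0 (d2-b) y 0 0 (d3-b) = 0"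
    by (simp only: upper_minus)
  then have "mat3 ((a-a)*(a-b)) ((a-a)*x1+x1*(d2-b)) ((a-a)*x2+x1*y+x2*(d3-b)) 0 ((d2-a)*(d2-b)) ((d2-a)*y+y*(d3-b)) 0 0 ((d3-a)*(d3-b)) = 0"
    by (simp only: upper_prod)
  then have e: "(d2 - a) * (d2 - b) = 0" "(d3 - a) * (d3 - b) = 0" "(d2 - a) * y + y * (d3 - b) = 0"
    unfolding mat3_zero mat3_eq_iff by blast+
  have cp: "char_poly_fun A = char_poly_fun (mat3 a x1 x2 0 d2 y 0 0 d3)"
    using us_invariants[OF T] by blast
  have cz: "(z - a) * (z - d2) * (z - d3) = (z - a) * (z - b)^2" for z
    using fun_cong[OF cp, of z] assms(3)[of z] char_upper[of a x1 x2 d2 y d3 z] by (simp only:)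
  have dd: "d2 = a \<or> d2 = b" "d3 = a \<or> d3 = b" using e(1,2) by simp_all
  have d: "d2 = b" "d3 = b" using cubic_cancel[OF assms(2) dd cz] by simp_all
  then have "y = 0" using e(3) assms(2) by simp
  then have "unitarily_similar A (mat3 a x1 x2 0 b 0 0 0 b)" using T d by simp
  from us_trans[OF this row_reduce] show ?thesis by (intro exI conjI) (auto simp del: real_sqrt_ge_0_iff, simp)
qed

lemma canon_nil:
  fixes A :: cm
  assumes "(A - mat a) ** (A - mat a) = 0" "A \<noteq> mat a"
  shows "\<exists>r. r \<ge> 0 \<and> unitarily_similar A (Cf a a r)"
proof -
  obtain u where u: "u \<noteq> 0" "A *v u = a *s u" using eigvec_from_minpoly[OF assms(1,2)] by blast
  obtain x1 x2 d2 y d3 where T: "unitarily_similar A (mat3 a x1 x2 0 d2 y 0 0 d3)"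
    using triang_setup[OF u(2,1)] by blast
  have p: "(mat3 a x1 x2 0 d2 y 0 0 d3 - mat a) ** (mat3 a x1 x2 0 d2 y 0 0 d3 - mat a) = 0"
    by (rule us_poly2[OF T assms(1)])
  then have "mat3 (a-a) x1 x2 0 (d2-a) y 0 0 (d3-a) ** mat3 (a-a) x1 x2 0 (d2-a) y 0 0 (d3-a) = 0"
    by (simp only: upper_minus)
  then have "mat3 ((a-a)*(a-a)) ((a-a)*x1+x1*(d2-a)) ((a-a)*x2+x1*y+x2*(d3-a)) 0 ((d2-a)*(d2-a)) ((d2-a)*y+y*(d3-a)) 0 0 ((d3-a)*(d3-a)) = 0"
    by (simp only: upper_prod)
  then have e: "(d2 - a) * (d2 - a) = 0" "(d3 - a) * (d3 - a) = 0" "(a-a)*x2+x1*y+x2*(d3-a) = 0"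
    unfolding mat3_zero mat3_eq_iff by blast+
  then have d: "d2 = a" "d3 = a" by simp_all
  then have "x1 * y = 0" using e(3) by simp
  then consider "y = 0" | "x1 = 0" by auto
  then show ?thesis
  proof cases
    case 1
    then have "unitarily_similar A (mat3 a x1 x2 0 a 0 0 0 a)" using T d by simp
    from us_trans[OF this row_reduce] show ?thesis by (intro exI conjI) (auto simp del: real_sqrt_ge_0_iff, simp)
  next
    case 2
    then have "unitarily_similar A (mat3 a 0 x2 0 a y 0 0 a)" using T d by simp
    from us_trans[OF this col_reduce] show ?thesis by (intro exI conjI) (auto simp del: real_sqrt_ge_0_iff, simp)
  qed
qed



lemma norm_le_l1_vec: "norm (x::'a::real_normed_vector^'n) \<le> (\<Sum>i\<in>UNIV. norm (x$i))"
  unfolding norm_vec_def by (rule L2_set_le_sum) simp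

lemma sn_le_norm: "spectral_norm (M::cm) \<le> 9 * norm M"
  unfolding spectral_norm_def
proof (rule onorm_le)
  fix x :: "complex^3"
  have "norm (M *v x) \<le> (\<Sum>i\<in>UNIV. norm ((M *v x)$i))" by (rule norm_le_l1_vec)
  also have "\<dots> \<le> (\<Sum>i\<in>(UNIV::3 set). 3 * (norm M * norm x))"
  proof (rule sum_mono)
    fix i :: 3
    have "norm ((M *v x)$i) = norm (\<Sum>j\<in>UNIV. M$i$j * x$j)" by (simp add: matrix_vector_mult_def)
    also have "\<dots> \<le> (\<Sum>j\<in>UNIV. norm (M$i$j * x$j))" by (rule norm_sum)
    also have "\<dots> \<le> (\<Sum>j\<in>(UNIV::3 set). norm M * norm x)"
    proof (rule sum_mono)
      fix j
      have "norm (M$i$j) \<le> norm (M$i)" by (rule Finite_Cartesian_Product.norm_nth_le)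
      also have "norm (M$i) \<le> norm M" by (rule Finite_Cartesian_Product.norm_nth_le)
      finally have "norm (M$i$j) \<le> norm M" .
      moreover have "norm (x$j) \<le> norm x" by (rule Finite_Cartesian_Product.norm_nth_le)
      ultimately show "norm (M$i$j * x$j) \<le> norm M * norm x"
        by (simp add: norm_mult mult_mono)
    qed
    also have "\<dots> = 3 * (norm M * norm x)" by (simp add: sum_3)
    finally show "norm ((M *v x)$i) \<le> 3 * (norm M * norm x)" .
  qed
  also have "\<dots> = 9 * norm M * norm x" by (simp add: sum_3)
  finally show "norm (M *v x) \<le> 9 * norm M * norm x" .
qed

lemma sn_triangle: "spectral_norm (X::cm) \<le> spectral_norm Y + spectral_norm (X - Y)"
proof -
  have "onorm (\<lambda>x. Y *v x + (X - Y) *v x) \<le> onorm ((*v) Y) + onorm ((*v) (X - Y))"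
    by (rule onorm_triangle) simp_all
  moreover have "(\<lambda>x. Y *v x + (X - Y) *v x) = (*v) X"
    by (rule ext) (simp add: matrix_vector_mult_diff_rdistrib)
  ultimately show ?thesis by (simp add: spectral_norm_def)
qed

lemma sn_lipschitz: "\<bar>spectral_norm (X::cm) - spectral_norm Y\<bar> \<le> 9 * dist X Y"
proof -
  have "spectral_norm X - spectral_norm Y \<le> 9 * norm (X - Y)"
    using sn_triangle[of X Y] sn_le_norm[of "X - Y"] by linarith
  moreover have "spectral_norm Y - spectral_norm X \<le> 9 * norm (Y - X)"
    using sn_triangle[of Y X] sn_le_norm[of "Y - X"] by linarith
  ultimately show ?thesis by (simp add: dist_norm norm_minus_commute)
qed

lemma sn_tendsto:
  assumes "(F \<longlongrightarrow> (L::cm)) net"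
  shows "((\<lambda>z. spectral_norm (F z)) \<longlongrightarrow> spectral_norm L) net"
proof -
  have "((\<lambda>z. dist (F z) L) \<longlongrightarrow> 0) net" using assms by (rule tendsto_dist_iff[THEN iffD1])
  then have "((\<lambda>z. 9 * dist (F z) L) \<longlongrightarrow> 0) net" by (rule tendsto_mult_right_zero)
  moreover have "eventually (\<lambda>z. norm (spectral_norm (F z) - spectral_norm L) \<le> 9 * dist (F z) L) net"
  proof (rule always_eventually, rule allI)
    fix z show "norm (spectral_norm (F z) - spectral_norm L) \<le> 9 * dist (F z) L"
      unfolding real_norm_def by (rule sn_lipschitz)
  qed
  ultimately have "((\<lambda>z. spectral_norm (F z) - spectral_norm L) \<longlongrightarrow> 0) net"
    by (rule Lim_null_comparison[rotated])
  then show ?thesis by (rule LIM_zero_cancel)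
qed

lemma tendsto_mat3:
  assumes "(f1 \<longlongrightarrow> a1) net" "(f2 \<longlongrightarrow> a2) net" "(f3 \<longlongrightarrow> a3) net"
    "(f4 \<longlongrightarrow> a4) net" "(f5 \<longlongrightarrow> a5) net" "(f6 \<longlongrightarrow> a6) net"
    "(f7 \<longlongrightarrow> a7) net" "(f8 \<longlongrightarrow> a8) net" "(f9 \<longlongrightarrow> a9) net"
  shows "((\<lambda>z. mat3 (f1 z) (f2 z) (f3 z) (f4 z) (f5 z) (f6 z) (f7 z) (f8 z) (f9 z)) \<longlongrightarrow>
     (mat3 a1 a2 a3 a4 a5 a6 a7 a8 a9 :: cm)) net"
proof (rule vec_tendstoI)
  fix i :: 3
  show "((\<lambda>z. mat3 (f1 z) (f2 z) (f3 z) (f4 z) (f5 z) (f6 z) (f7 z) (f8 z) (f9 z) $ i) \<longlongrightarrow>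
     (mat3 a1 a2 a3 a4 a5 a6 a7 a8 a9 :: cm) $ i) net"
  proof (rule vec_tendstoI)
    fix j :: 3
    show "((\<lambda>z. mat3 (f1 z) (f2 z) (f3 z) (f4 z) (f5 z) (f6 z) (f7 z) (f8 z) (f9 z) $ i $ j) \<longlongrightarrow>
     (mat3 a1 a2 a3 a4 a5 a6 a7 a8 a9 :: cm) $ i $ j) net"
      using exhaust_3[of i] exhaust_3[of j] assms by (elim disjE) simp_all
  qed
qed

lemma norm_smult_vec: "norm (c *s (v::complex^'n)) = cmod c * norm v"
proof -
  have "norm (c *s v) = L2_set (\<lambda>i. cmod c * norm (v$i)) UNIV"
    unfolding norm_vec_def by (simp add: norm_mult)
  also have "\<dots> = cmod c * L2_set (\<lambda>i. norm (v$i)) UNIV"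
    by (rule L2_set_right_distrib[symmetric]) simp
  finally show ?thesis by (simp add: norm_vec_def)
qed

lemma sn_scale_le: "spectral_norm (mat d ** (N::cm)) \<le> cmod d * spectral_norm N"
  unfolding spectral_norm_def
proof (rule onorm_le)
  fix x
  have "norm ((mat d ** N) *v x) = norm (d *s (N *v x))"
    by (simp only: mat_mv flip: matrix_vector_mul_assoc)
  also have "\<dots> = cmod d * norm (N *v x)" by (rule norm_smult_vec)
  also have "\<dots> \<le> cmod d * (onorm ((*v) N) * norm x)"
    by (rule mult_left_mono[OF onorm[OF matrix_vector_mul_bounded_linear] norm_ge_zero])
  finally show "norm ((mat d ** N) *v x) \<le> cmod d * onorm ((*v) N) * norm x" by (simp only: mult.assoc)
qed

lemma sn_nonneg: "0 \<le> spectral_norm (M::cm)"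
  unfolding spectral_norm_def by (rule onorm_pos_le[OF matrix_vector_mul_bounded_linear])

lemma sn_scale: "spectral_norm (mat c ** (M::cm)) = cmod c * spectral_norm M"
proof (cases "c = 0")
  case True
  then show ?thesis using sn_scale_le[of 0 M] sn_nonneg[of "mat c ** M"] by simp
next
  case False
  have "mat (1/c) ** (mat c ** M) = M" using False by (simp add: matrix_mul_assoc mat_mult_mat)
  then have "spectral_norm M \<le> cmod (1/c) * spectral_norm (mat c ** M)"
    using sn_scale_le[of "1/c" "mat c ** M"] by simp
  then have "cmod c * spectral_norm M \<le> cmod c * (cmod (1/c) * spectral_norm (mat c ** M))"
    by (rule mult_left_mono) simp
  also have "\<dots> = spectral_norm (mat c ** M)" using False by (simp add: norm_divide)
  finally show ?thesis using sn_scale_le[of c M] by simp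
qed

lemma cs2: "a * b + c * d \<le> sqrt (a^2 + c^2) * sqrt (b^2 + d^2)" for a b c d :: real
proof -
  have e: "(a^2 + c^2) * (b^2 + d^2) - (a * b + c * d)^2 = (a * d - c * b)^2"
    by (simp add: power2_eq_square algebra_simps)
  have "0 \<le> (a * d - c * b)^2" by simp
  then have h: "(a * b + c * d)^2 \<le> (a^2 + c^2) * (b^2 + d^2)" using e by linarith
  have "a * b + c * d \<le> \<bar>a * b + c * d\<bar>" by simp
  also have "\<dots> = sqrt ((a * b + c * d)^2)" by simp
  also have "\<dots> \<le> sqrt ((a^2 + c^2) * (b^2 + d^2))" using h by (rule real_sqrt_le_mono)
  also have "\<dots> = sqrt (a^2 + c^2) * sqrt (b^2 + d^2)" by (rule real_sqrt_mult)
  finally show ?thesis .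
qed

lemma cnorm_sq': "(complex_of_real (cmod z))^2 = z * cnj z"
  by (metis complex_norm_square of_real_power)

lemma sqrt_pow4: "sqrt ((t::real)^4) = t^2"
proof -
  have "t^4 = (t^2)^2" by (simp flip: power_mult)
  then have "sqrt (t^4) = \<bar>t^2\<bar>" by (simp only: real_sqrt_abs)
  then show ?thesis by simp
qed

lemma sn_row: "spectral_norm (mat3 p q 0 0 0 0 0 0 0) = sqrt ((cmod p)^2 + (cmod q)^2)"
proof (rule antisym)
  define \<rho> where "\<rho> = sqrt ((cmod p)^2 + (cmod q)^2)"
  show "spectral_norm (mat3 p q 0 0 0 0 0 0 0) \<le> sqrt ((cmod p)^2 + (cmod q)^2)"
    unfolding spectral_norm_def
  proof (rule onorm_le)
    fix x :: "complex^3"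
    have "norm (mat3 p q 0 0 0 0 0 0 0 *v x) = cmod (p * x$1 + q * x$2)"
      by (simp add: mv3[of _ "x$1" "x$2" "x$3", folded vec3_eta] norm_vec3)
    also have "\<dots> \<le> cmod p * cmod (x$1) + cmod q * cmod (x$2)"
      by (metis norm_mult norm_triangle_ineq)
    also have "\<dots> \<le> \<rho> * sqrt ((cmod (x$1))^2 + (cmod (x$2))^2)"
      unfolding \<rho>_def by (rule cs2)
    also have "\<dots> \<le> \<rho> * norm x"
      by (intro mult_left_mono) (simp_all add: \<rho>_def norm_vec3)
    finally show "norm (mat3 p q 0 0 0 0 0 0 0 *v x) \<le> sqrt ((cmod p)^2 + (cmod q)^2) * norm x"
      by (simp add: \<rho>_def)
  qed
  show "sqrt ((cmod p)^2 + (cmod q)^2) \<le> spectral_norm (mat3 p q 0 0 0 0 0 0 0)"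
  proof (cases "\<rho> = 0")
    case True
    then show ?thesis
      using onorm_pos_le[OF matrix_vector_mul_bounded_linear] by (simp add: \<rho>_def spectral_norm_def)
  next
    case False
    have "\<rho> \<ge> 0" by (simp add: \<rho>_def)
    then have rpos: "\<rho> > 0" using False by linarith
    define x where "x = (vector [cnj p, cnj q, 0] :: complex^3)"
    have nx: "norm x = \<rho>" by (simp add: x_def norm_vec3 \<rho>_def)
    have "mat3 p q 0 0 0 0 0 0 0 *v x = vector [complex_of_real (\<rho>^2), 0, 0]"
      by (simp add: x_def mat3_mv \<rho>_def cnorm_sq')
    then have nmx: "norm (mat3 p q 0 0 0 0 0 0 0 *v x) = \<rho>^2"
      by (simp add: norm_vec3 norm_power sqrt_pow4)
    have "norm (mat3 p q 0 0 0 0 0 0 0 *v x) / norm x \<le> spectral_norm (mat3 p q 0 0 0 0 0 0 0)"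
      unfolding spectral_norm_def by (rule le_onorm) simp
    then have "\<rho> \<le> spectral_norm (mat3 p q 0 0 0 0 0 0 0)" using rpos by (simp add: nmx nx power2_eq_square)
    then show ?thesis by (simp only: \<rho>_def)
  qed
qed



definition Rinv :: "complex \<Rightarrow> complex \<Rightarrow> real \<Rightarrow> complex \<Rightarrow> cm" where
  "Rinv a b r z = mat3 (1/(z-a)) (complex_of_real r/((z-a)*(z-b))) 0 0 (1/(z-b)) 0 0 0 (1/(z-b))"

lemma inv_upper:
  fixes u v r :: complex
  assumes "u \<noteq> 0" "v \<noteq> 0"
  shows "mat3 u (-r) 0 0 v 0 0 0 v ** mat3 (1/u) (r/(u * v)) 0 0 (1/v) 0 0 0 (1/v) = mat 1"
  using assms by (simp add: m3simps)

lemma resolvent_Cf: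
  assumes "z \<noteq> a" "z \<noteq> b"
  shows "resolvent_norm (Cf a b r) z = ereal (spectral_norm (Rinv a b r z))"
proof -
  have za: "z - a \<noteq> 0" "z - b \<noteq> 0" using assms by auto
  have "mat z - Cf a b r = mat3 (z-a) (- complex_of_real r) 0 0 (z-b) 0 0 0 (z-b)"
    by (simp add: Cf_def m3simps)
  then have "(mat z - Cf a b r) ** Rinv a b r z = mat 1"
    using inv_upper[OF za] by (simp add: Rinv_def)
  then show ?thesis using inverse_unique by (simp add: resolvent_norm_def)
qed

lemma limit_eq:
  fixes F1 F2 :: "complex \<Rightarrow> cm"
  assumes "eventually (\<lambda>z. spectral_norm (F1 z) = spectral_norm (F2 z)) (at a)"
    "(F1 \<longlongrightarrow> L1) (at (a::complex))" "(F2 \<longlongrightarrow> L2) (at a)"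
  shows "spectral_norm L1 = spectral_norm L2"
proof -
  have t1: "((\<lambda>z. spectral_norm (F1 z)) \<longlongrightarrow> spectral_norm L1) (at a)" by (rule sn_tendsto[OF assms(2)])
  have t2: "((\<lambda>z. spectral_norm (F2 z)) \<longlongrightarrow> spectral_norm L2) (at a)" by (rule sn_tendsto[OF assms(3)])
  have "((\<lambda>z. spectral_norm (F2 z)) \<longlongrightarrow> spectral_norm L1) (at a)"
    by (rule Lim_transform_eventually[OF t1 assms(1)])
  then show ?thesis using t2 tendsto_unique[OF trivial_limit_at] by blast
qed

lemma res_eq_imp:
  assumes "\<And>z. resolvent_norm (Cf a b r1) z = resolvent_norm (Cf a b r2) z"
    "z \<noteq> a" "z \<noteq> b"
  shows "spectral_norm (Rinv a b r1 z) = spectral_norm (Rinv a b r2 z)"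
  using assms(1)[of z] resolvent_Cf[OF assms(2,3)] by simp

lemma res_determines_r:
  assumes "\<And>z. resolvent_norm (Cf a b r1) z = resolvent_norm (Cf a b r2) z"
    "r1 \<ge> 0" "r2 \<ge> 0"
  shows "r1 = r2"
proof (cases "a = b")
  case False
  define F where "F r z = mat3 1 (complex_of_real r/(z-b)) 0 0 ((z-a)/(z-b)) 0 0 0 ((z-a)/(z-b))" for r z
  have RF: "Rinv a b r z = mat (1/(z-a)) ** F r z" if "z \<noteq> a" "z \<noteq> b" for r z
  proof -
    have za: "z - a \<noteq> 0" "z - b \<noteq> 0" using that by auto
    then show ?thesis by (simp add: Rinv_def F_def m3simps field_simps)
  qed
  have ev: "eventually (\<lambda>z. z \<noteq> a \<and> z \<noteq> b) (at a)"
    using eventually_neq_at_within[of a a UNIV] eventually_neq_at_within[of b a UNIV]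
    by (auto elim: eventually_elim2)
  have evF: "eventually (\<lambda>z. spectral_norm (F r1 z) = spectral_norm (F r2 z)) (at a)"
  proof (rule eventually_mono[OF ev])
    fix z assume z: "z \<noteq> a \<and> z \<noteq> b"
    have "cmod (1/(z-a)) * spectral_norm (F r1 z) = cmod (1/(z-a)) * spectral_norm (F r2 z)"
      using res_eq_imp[OF assms(1)] z RF sn_scale by metis
    then show "spectral_norm (F r1 z) = spectral_norm (F r2 z)" using z by simp
  qed
  have lim: "(F r \<longlongrightarrow> mat3 1 (complex_of_real r/(a-b)) 0 0 0 0 0 0 0) (at a)" for r
  proof -
    have "((\<lambda>z. (z-a)/(z-b)) \<longlongrightarrow> (a-a)/(a-b)) (at a)"
      using False by (intro tendsto_intros) auto
    then have h1: "((\<lambda>z. (z-a)/(z-b)) \<longlongrightarrow> 0) (at a)" by simp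
    have h2: "((\<lambda>z. complex_of_real r/(z-b)) \<longlongrightarrow> complex_of_real r/(a-b)) (at a)"
      using False by (intro tendsto_intros) auto
    show ?thesis unfolding F_def
      by (rule tendsto_mat3) (simp_all add: h1 h2)
  qed
  have "spectral_norm (mat3 1 (complex_of_real r1/(a-b)) 0 0 0 0 0 0 0)
      = spectral_norm (mat3 1 (complex_of_real r2/(a-b)) 0 0 0 0 0 0 0)"
    by (rule limit_eq[OF evF lim lim])
  then have "sqrt (1 + (cmod (complex_of_real r1/(a-b)))^2) = sqrt (1 + (cmod (complex_of_real r2/(a-b)))^2)"
    by (simp add: sn_row)
  then have "(cmod (complex_of_real r1/(a-b)))^2 = (cmod (complex_of_real r2/(a-b)))^2" by simp
  then have "(r1 / cmod (a-b))^2 = (r2 / cmod (a-b))^2" using assms(2,3) by (simp add: norm_divide)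
  then have "r1 / cmod (a-b) = r2 / cmod (a-b)" using assms(2,3) by (simp add: power2_eq_iff_nonneg)
  then show ?thesis using False by simp
next
  case True
  define F where "F r z = mat3 (z-a) (complex_of_real r) 0 0 (z-a) 0 0 0 (z-a)" for r z
  have RF: "Rinv a b r z = mat (1/(z-a)^2) ** F r z" if "z \<noteq> a" for r z
  proof -
    have za: "z - a \<noteq> 0" using that by auto
    have gen: "mat3 (1/u) (rr/(u * u)) 0 0 (1/u) 0 0 0 (1/u) = mat (1/u^2) ** mat3 u rr 0 0 u 0 0 0 u"
      if "u \<noteq> 0" for u rr :: complex
      using that by (simp add: m3simps power2_eq_square)
    show ?thesis using gen[OF za] True by (simp add: Rinv_def F_def)
  qed
  have ev: "eventually (\<lambda>z. z \<noteq> a) (at a)"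
    by (rule eventually_neq_at_within)
  have evF: "eventually (\<lambda>z. spectral_norm (F r1 z) = spectral_norm (F r2 z)) (at a)"
  proof (rule eventually_mono[OF ev])
    fix z assume z: "z \<noteq> a"
    have "cmod (1/(z-a)^2) * spectral_norm (F r1 z) = cmod (1/(z-a)^2) * spectral_norm (F r2 z)"
      using res_eq_imp[OF assms(1)] z True RF sn_scale by metis
    then show "spectral_norm (F r1 z) = spectral_norm (F r2 z)" using z by simp
  qed
  have lim: "(F r \<longlongrightarrow> mat3 0 (complex_of_real r) 0 0 0 0 0 0 0) (at a)" for r
  proof -
    have h1: "((\<lambda>z. z-a) \<longlongrightarrow> 0) (at a)"
      by (rule LIM_zero) (rule tendsto_ident_at)
    show ?thesis unfolding F_def
      by (rule tendsto_mat3) (simp_all add: h1)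
  qed
  have "spectral_norm (mat3 0 (complex_of_real r1) 0 0 0 0 0 0 0)
      = spectral_norm (mat3 0 (complex_of_real r2) 0 0 0 0 0 0 0)"
    by (rule limit_eq[OF evF lim lim])
  then show ?thesis using assms(2,3) by (simp add: sn_row)
qed



lemma us_scalar:
  assumes "unitarily_similar A (mat a :: cm)"
  shows "A = mat a"
proof -
  obtain U where U: "unitary_mat U" "mat a = U ** A ** conj_transpose U"
    using assms unfolding unitarily_similar_def by blast
  have "A = conj_transpose U ** (U ** A ** conj_transpose U) ** U"
    using unitary_cancel(1)[OF U(1)] by simp
  also have "\<dots> = conj_transpose U ** mat a ** conj_transpose (conj_transpose U)"
    using U(2) by simp
  also have "\<dots> = mat a" by (rule unitary_conj_mat[OF unitary_ct[OF U(1)]])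
  finally show ?thesis .
qed

lemma char_form:
  fixes A :: cm
  assumes "(A - mat a) ** (A - mat b) = 0" "a \<noteq> b" "A \<noteq> mat a" "A \<noteq> mat b"
  shows "(\<forall>z. char_poly_fun A z = (z - a) * (z - b)^2) \<or> (\<forall>z. char_poly_fun A z = (z - b) * (z - a)^2)"
proof -
  obtain u where u: "u \<noteq> 0" "A *v u = a *s u" using eigvec_from_minpoly[OF assms(1,4)] by blast
  obtain x1 x2 d2 y d3 where T: "unitarily_similar A (mat3 a x1 x2 0 d2 y 0 0 d3)"
    using triang_setup[OF u(2,1)] by blast
  have p: "(mat3 a x1 x2 0 d2 y 0 0 d3 - mat a) ** (mat3 a x1 x2 0 d2 y 0 0 d3 - mat b) = 0"
    by (rule us_poly2[OF T assms(1)])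
  then have "mat3 (a-a) x1 x2 0 (d2-a) y 0 0 (d3-a) ** mat3 (a-b) x1 x2 0 (d2-b) y 0 0 (d3-b) = 0"
    by (simp only: upper_minus)
  then have "mat3 ((a-a)*(a-b)) ((a-a)*x1+x1*(d2-b)) ((a-a)*x2+x1*y+x2*(d3-b)) 0 ((d2-a)*(d2-b)) ((d2-a)*y+y*(d3-b)) 0 0 ((d3-a)*(d3-b)) = 0"
    by (simp only: upper_prod)
  then have e: "(d2 - a) * (d2 - b) = 0" "(d3 - a) * (d3 - b) = 0" "(d2 - a) * y + y * (d3 - b) = 0"
     "(a-a)*x1+x1*(d2-b) = 0" "(a-a)*x2+x1*y+x2*(d3-b) = 0"
    unfolding mat3_zero mat3_eq_iff by blast+
  have cp: "char_poly_fun A z = (z - a) * (z - d2) * (z - d3)" for z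
    using us_invariants[OF T] char_upper[of a x1 x2 d2 y d3 z] by simp
  have dd: "d2 = a \<or> d2 = b" "d3 = a \<or> d3 = b" using e(1,2) by simp_all
  have "\<not> (d2 = a \<and> d3 = a)"
  proof
    assume d: "d2 = a \<and> d3 = a"
    then have "x1 = 0" using e(4) assms(2) by simp
    moreover have "y = 0" using d e(3) assms(2) by simp
    moreover have "x2 = 0" using d e(5) assms(2) \<open>x1 = 0\<close> by simp
    ultimately have "unitarily_similar A (mat a)" using T d by (simp add: mat3_mat)
    then show False using us_scalar assms(3) by blast
  qed
  then consider "d2 = b" "d3 = b" | "d2 = a" "d3 = b" | "d2 = b" "d3 = a" using dd by blast
  then show ?thesis
  proof cases
    case 1 then show ?thesis using cp by (simp add: power2_eq_square)
  next
    case 2 then show ?thesis using cp by (simp add: power2_eq_square algebra_simps)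
  next
    case 3 then show ?thesis using cp by (simp add: power2_eq_square algebra_simps)
  qed
qed

lemma poly_comm: "(A - mat a) ** (A - mat b) = (A - mat b) ** (A - mat (a::complex)) " for A :: cm
  by (rule mat3_obtain[of A]) (simp add: m3simps algebra_simps)

theorem theorem11:
  fixes A B :: "complex^3^3"
  assumes "minimal_poly A = minimal_poly B"
    and "degree (minimal_poly A) = 2"
  shows "((\<forall>z. resolvent_norm A z = resolvent_norm B z) \<and> char_poly_fun A = char_poly_fun B)
         \<longleftrightarrow> unitarily_similar A B"
proof
  assume "unitarily_similar A B"
  then show "(\<forall>z. resolvent_norm A z = resolvent_norm B z) \<and> char_poly_fun A = char_poly_fun B"
    by (rule us_invariants)
next
  assume H: "(\<forall>z. resolvent_norm A z = resolvent_norm B z) \<and> char_poly_fun A = char_poly_fun B"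
  obtain a b where ab: "(A - mat a) ** (A - mat b) = 0" "(B - mat a) ** (B - mat b) = 0"
    "\<forall>c. A \<noteq> mat c" "\<forall>c. B \<noteq> mat c"
    using minpoly2_struct[OF assms] by blast
  have fin: "unitarily_similar A B"
    if "r1 \<ge> 0" "r2 \<ge> 0" "unitarily_similar A (Cf p q r1)" "unitarily_similar B (Cf p q r2)" for p q r1 r2
  proof -
    have "resolvent_norm (Cf p q r1) z = resolvent_norm (Cf p q r2) z" for z
      using us_invariants[OF that(3)] us_invariants[OF that(4)] H by simp
    then have "r1 = r2" using res_determines_r that(1,2) by blast
    then show ?thesis using that(3,4) us_sym us_trans by blast
  qed
  show "unitarily_similar A B"
  proof (cases "a = b")
    case True
    obtain r1 where r1: "r1 \<ge> 0" "unitarily_similar A (Cf a a r1)"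
      using canon_nil[of A a] ab True by blast
    obtain r2 where r2: "r2 \<ge> 0" "unitarily_similar B (Cf a a r2)"
      using canon_nil[of B a] ab True by blast
    show ?thesis by (rule fin[OF r1(1) r2(1) r1(2) r2(2)])
  next
    case False
    have cB: "char_poly_fun B z = char_poly_fun A z" for z using H by simp
    consider "\<forall>z. char_poly_fun A z = (z - a) * (z - b)^2" | "\<forall>z. char_poly_fun A z = (z - b) * (z - a)^2"
      using char_form[OF ab(1) False] ab(3) by blast
    then show ?thesis
    proof cases
      case 1
      obtain r1 where r1: "r1 \<ge> 0" "unitarily_similar A (Cf a b r1)"
        using canon_diag[OF ab(1) False] 1 ab(3) by blast
      obtain r2 where r2: "r2 \<ge> 0" "unitarily_similar B (Cf a b r2)"
        using canon_diag[OF ab(2) False] 1 cB ab(4) by metis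
      show ?thesis by (rule fin[OF r1(1) r2(1) r1(2) r2(2)])
    next
      case 2
      have F': "b \<noteq> a" using False by simp
      have pA: "(A - mat b) ** (A - mat a) = 0" using ab(1) poly_comm by metis
      have pB: "(B - mat b) ** (B - mat a) = 0" using ab(2) poly_comm by metis
      obtain r1 where r1: "r1 \<ge> 0" "unitarily_similar A (Cf b a r1)"
        using canon_diag[OF pA F'] 2 ab(3) by blast
      obtain r2 where r2: "r2 \<ge> 0" "unitarily_similar B (Cf b a r2)"
        using canon_diag[OF pB F'] 2 cB ab(4) by metis
      show ?thesis by (rule fin[OF r1(1) r2(1) r1(2) r2(2)])
    qed
  qed
qed

end
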